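(* Let $\theta=\sqrt{b/a}$ with $a<b$ coprime positive integers not both perfect squares, and let $\Xi(\theta)>0$ be a constant such that $|u/v-\theta|\ge\Xi(\theta)/v^2$ for all $u\in\mathbb{Z}$, $v\in\mathbb{N}_{\ge1}$. Then for every $\varepsilon>\Xi(\theta)$ and all $B$ sufficiently large in terms of $\varepsilon$, $$\delta_{\theta,B,1/2}(\chi_\varepsilon)\le6\sum_{\substack{m\in\mathbb{Z}\setminus\{0\}\\|m|\le2\varepsilon\sqrt{ab}+1}}\tau(A'|m|)\left(\left\lfloor\frac{\log\varepsilon-\log\Xi(\theta)}{2\log\varepsilon^*_{A'B'}}\right\rfloor+1\right).$$
   Context: On $\mathbb{P}^1(\mathbb{Q})$ use $H([u:v])=\max(|u|,|v|)$ with $u,v$ coprime integers; $\delta_{\theta,B,r}(f)=\sum_{[u:v]\in\mathbb{P}^1(\mathbb{Q}),v\ne0,H([u:v])\le B}f(B^{1/r}(u/v-\theta))$, and $\chi_\varepsilon$ is the indicator of $\{t\in\mathbb{R}:|t|\le\varepsilon\}$. Write $a=A'a'^2$, $b=B'b'^2$ with $A',B'$ squarefree positive integers (so $A'B'$ is squarefree). For a squarefree integer $D>1$, $\varepsilon^*_D>1$ denotes the element of $\{z\in\mathbb{Z}+\mathbb{Z}\sqrt D: z\bar z=1\}$ whose class generates this group modulo $\{\pm1\}$ (where $\overline{x+y\sqrt D}=x-y\sqrt D$). $\tau(n)$ is the number of positive divisors of $n$. *)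

theory Defs
  imports "HOL-Analysis.Analysis" "HOL-Computational_Algebra.Squarefree"
begin

text \<open>Points [u:v] of P^1(Q) with v nonzero are represented uniquely by coprime
  integers u, v with v >= 1; their height is max |u| |v|.\<close>
definition delta :: "real \<Rightarrow> real \<Rightarrow> real \<Rightarrow> (real \<Rightarrow> real) \<Rightarrow> real" where
  "delta \<theta> B r f =
     (\<Sum>(u,v)\<in>{(u::int, v::int). v \<ge> 1 \<and> coprime u v \<and> real_of_int (max \<bar>u\<bar> \<bar>v\<bar>) \<le> B}.
        f (B powr (1 / r) * (real_of_int u / real_of_int v - \<theta>)))"

definition chi :: "real \<Rightarrow> real \<Rightarrow> real" where
  "chi \<epsilon> t = (if \<bar>t\<bar> \<le> \<epsilon> then 1 else 0)"

text \<open>Norm-one elements z = x + y sqrt D of Z[sqrt D], viewed as reals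
  (for D > 1 squarefree the representation is unique, and z * conj z = x^2 - D y^2).\<close>
definition norm_one :: "int \<Rightarrow> real set" where
  "norm_one D = {real_of_int x + real_of_int y * sqrt (real_of_int D) | x y :: int. x^2 - D * y^2 = 1}"

definition fund_unit :: "int \<Rightarrow> real" where
  "fund_unit D = (THE e. e > 1 \<and> e \<in> norm_one D \<and>
      (\<forall>z\<in>norm_one D. \<exists>k::int. z = e powi k \<or> z = - (e powi k)))"

definition num_divisors :: "nat \<Rightarrow> nat" where
  "num_divisors n = card {d::nat. d dvd n}"

end

theory Submission imports Defs "HOL-Computational_Algebra.Nth_Powers"
begin


lemma irr0:
  fixes D :: nat and x y :: int
  assumes ns: "\<not> (\<exists>s. D = s^2)"
    and h: "real_of_int x + real_of_int y * sqrt (real D) = 0"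
  shows "x = 0 \<and> y = 0"
proof -
  have "real_of_int x = - real_of_int y * sqrt (real D)" using h by linarith
  hence "(real_of_int x)^2 = (real_of_int y)^2 * real D"
    by (simp add: power_mult_distrib)
  hence "real_of_int (x^2) = real_of_int (y^2 * int D)" by simp
  hence "x^2 = y^2 * int D" by (simp only: of_int_eq_iff)
  hence e: "(nat \<bar>x\<bar>)^2 = D * (nat \<bar>y\<bar>)^2"
  proof -
    have "int ((nat \<bar>x\<bar>)^2) = x^2" by simp
    moreover have "int (D * (nat \<bar>y\<bar>)^2) = int D * y^2" by simp
    ultimately show ?thesis using \<open>x^2 = y^2 * int D\<close> by (metis mult.commute of_nat_eq_iff)
  qed
  have "y = 0"
  proof (rule ccontr)
    assume "y \<noteq> 0"
    hence "(nat \<bar>y\<bar>)^2 \<noteq> 0" by simp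
    moreover have "is_nth_power 2 (D * (nat \<bar>y\<bar>)^2)" using e by (metis is_nth_power_nth_power)
    ultimately have "is_nth_power 2 D"
      using is_nth_power_mult_cancel_right[of 2 "(nat \<bar>y\<bar>)^2" D] by auto
    thus False using ns by (auto elim: is_nth_powerE)
  qed
  thus ?thesis using h by simp
qed

lemma eq_coeffs:
  fixes D :: nat and x y x' y' :: int
  assumes ns: "\<not> (\<exists>s. D = s^2)"
    and h: "real_of_int x + real_of_int y * sqrt (real D) = real_of_int x' + real_of_int y' * sqrt (real D)"
  shows "x = x' \<and> y = y'"
proof -
  have "real_of_int (x - x') + real_of_int (y - y') * sqrt (real D) = 0"
    using h by (simp add: algebra_simps)
  from irr0[OF ns this] show ?thesis by simp
qed

lemma sqrt_irrat:
  fixes D :: nat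
  assumes ns: "\<not> (\<exists>s. D = s^2)"
  shows "sqrt (real D) \<notin> \<rat>"
proof
  assume "sqrt (real D) \<in> \<rat>"
  then obtain p q :: int where q: "q > 0" and e: "sqrt (real D) = of_int p / of_int q"
    by (elim Rats_cases')
  hence "real_of_int (-p) + real_of_int q * sqrt (real D) = 0" by simp
  from irr0[OF ns this] q show False by simp
qed

lemma ns_ge2: assumes "\<not> (\<exists>s. D = s^2)" shows "D \<ge> (2::nat)"
proof (rule ccontr)
  assume "\<not> D \<ge> 2"
  hence "D = 0^2 \<or> D = 1^2" by auto
  thus False using assms by blast
qed



lemma pos_parts:
  fixes D :: nat and x y :: int
  assumes D: "D \<ge> 1" and n: "x^2 - int D * y^2 = 1"
    and g: "real_of_int x + real_of_int y * sqrt (real D) > 1"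
  shows "x > 0 \<and> y > 0"
proof -
  define r where "r = sqrt (real D)"
  have rr: "r * r = real D" unfolding r_def by simp
  have r0: "r > 0" using D unfolding r_def by simp
  define z where "z = real_of_int x + real_of_int y * r"
  define zb where "zb = real_of_int x - real_of_int y * r"
  have "real_of_int (x^2 - int D * y^2) = 1" using n by simp
  hence "z * zb = 1" unfolding z_def zb_def using rr
    by (simp add: algebra_simps power2_eq_square)
  moreover have "z > 1" using g unfolding z_def r_def by simp
  ultimately have "zb = 1/z" by (simp add: field_simps)
  hence zb: "zb > 0" "zb < 1" using \<open>z > 1\<close> by simp_all
  have "2 * real_of_int x = z + zb" unfolding z_def zb_def by simp
  hence "real_of_int x > 0" using \<open>z>1\<close> zb by linarith
  moreover have "2 * (real_of_int y * r) = z - zb" unfolding z_def zb_def by simp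
  hence "real_of_int y * r > 0" using \<open>z>1\<close> zb by linarith
  hence "real_of_int y > 0" using r0 by (simp add: zero_less_mult_iff)
  ultimately show ?thesis by simp
qed

lemma pell_exists:
  fixes D :: nat assumes ns: "\<not>(\<exists>s. D = s^2)"
  shows "\<exists>x y::int. x^2 - int D * y^2 = 1 \<and> real_of_int x + real_of_int y * sqrt (real D) > 1"
proof -
  define r where "r = sqrt (real D)"
  have D2: "D \<ge> 2" using ns_ge2[OF ns] .
  have r1: "r \<ge> 1" unfolding r_def using D2 by simp
  have rr: "r * r = real D" unfolding r_def by simp
  have inf: "infinite (approx_set r)"
    using sqrt_irrat[OF ns] rational_iff_finite_approx_set unfolding r_def by blast
  define c where "c = 2 * r + 1"
  define N where "N = (\<lambda>(h::int,k::int). h^2 - int D * k^2)"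
  define f where "f = (\<lambda>p. (N p, fst p mod N p, snd p mod N p))"
  have key: "k > 0 \<and> real_of_int h + real_of_int k * r > 0 \<and> N (h,k) \<noteq> 0
      \<and> real_of_int \<bar>N (h,k)\<bar> \<le> c" if hk: "(h,k) \<in> approx_set r" for h k
  proof -
    from hk have k: "k > 0" and ap: "\<bar>r - h/k\<bar> < 1/k^2" by (auto simp: approx_set_def)
    have kk: "real_of_int k \<ge> 1" using k by simp
    have "real_of_int k * r - h = real_of_int k * (r - h/k)" using k by (simp add: field_simps)
    hence "\<bar>real_of_int k * r - h\<bar> = real_of_int k * \<bar>r - h/k\<bar>"
      using k by (simp add: abs_mult)
    also have "\<dots> \<le> real_of_int k * (1/k^2)" using ap k by (intro mult_left_mono) auto
    also have "\<dots> = 1/k" using k by (simp add: power2_eq_square)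
    finally have ap2: "\<bar>real_of_int h - real_of_int k * r\<bar> \<le> 1/k" by simp
    have ik: "1/real_of_int k \<le> 1" using kk by simp
    have kr: "real_of_int k * r \<ge> 1" using mult_mono[OF kk r1] k by simp
    have pos: "real_of_int h + real_of_int k * r > 0" using ap2 ik kr by linarith
    have nz: "real_of_int h - real_of_int k * r \<noteq> 0"
    proof
      assume "real_of_int h - real_of_int k * r = 0"
      hence "real_of_int h + real_of_int (-k) * sqrt (real D) = 0" unfolding r_def by simp
      from irr0[OF ns this] k show False by simp
    qed
    have prod: "real_of_int (N (h,k)) = (real_of_int h - real_of_int k * r) * (real_of_int h + real_of_int k * r)"
      unfolding N_def using rr by (simp add: algebra_simps power2_eq_square)
    have "N (h,k) \<noteq> 0" using prod nz pos by auto
    have "\<bar>real_of_int h + real_of_int k * r\<bar> \<le> 1/k + 2 * (real_of_int k * r)"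
      using ap2 kr by linarith
    hence "\<bar>real_of_int (N (h,k))\<bar> \<le> (1/k) * (1/k + 2 * (real_of_int k * r))"
      unfolding prod abs_mult using k by (intro mult_mono ap2) auto
    also have "\<dots> = 1/k * (1/k) + 2 * r" using k by (simp add: field_simps)
    also have "\<dots> \<le> 1 + 2 * r" using mult_le_one[of "1/real_of_int k" "1/real_of_int k"] ik k by simp
    finally show ?thesis using k pos \<open>N (h,k) \<noteq> 0\<close> unfolding c_def by simp
  qed
  define C where "C = \<lceil>c\<rceil>"
  have "f ` approx_set r \<subseteq> {-C..C} \<times> {-C..C} \<times> {-C..C}"
  proof
    fix q assume "q \<in> f ` approx_set r"
    then obtain h k where hk: "(h,k) \<in> approx_set r" and q: "q = f (h,k)" by auto
    define n where "n = N (h,k)"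
    from key[OF hk] have n0: "n \<noteq> 0" and nc: "real_of_int \<bar>n\<bar> \<le> c" unfolding n_def by auto
    have "real_of_int \<bar>n\<bar> \<le> real_of_int C" using nc le_of_int_ceiling[of c] unfolding C_def by linarith
    hence nC: "\<bar>n\<bar> \<le> C" by (simp only: of_int_le_iff)
    have md: "\<bar>m mod n\<bar> \<le> \<bar>n\<bar>" for m
    proof (cases "n > 0")
      case True
      have a1: "0 \<le> m mod n" "m mod n < n" using True by simp_all
      have "\<bar>m mod n\<bar> = m mod n" using a1(1) by (rule abs_of_nonneg)
      moreover have "\<bar>n\<bar> = n" using True by simp
      ultimately show ?thesis using a1 by linarith
    next
      case False hence "n < 0" using n0 by simp
      have a1: "m mod n \<le> 0" "n < m mod n" using \<open>n<0\<close> by simp_all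
      have "\<bar>m mod n\<bar> = - (m mod n)" using a1(1) by (rule abs_of_nonpos)
      moreover have "\<bar>n\<bar> = -n" using \<open>n<0\<close> by simp
      ultimately show ?thesis using a1 by linarith
    qed
    show "q \<in> {-C..C} \<times> {-C..C} \<times> {-C..C}"
      unfolding q f_def using nC md[of h] md[of k] by (auto simp: n_def[symmetric] abs_le_iff)
  qed
  hence fin: "finite (f ` approx_set r)" by (rule finite_subset) auto
  have "\<not> inj_on f (approx_set r)" using fin inf finite_imageD by blast
  then obtain h1 k1 h2 k2 where p1: "(h1,k1) \<in> approx_set r" and p2: "(h2,k2) \<in> approx_set r"
    and ne: "(h1,k1) \<noteq> (h2,k2)" and fe: "f (h1,k1) = f (h2,k2)"
    unfolding inj_on_def by auto
  define n where "n = N (h1,k1)"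
  have n2: "N (h2,k2) = n" using fe unfolding f_def n_def by simp
  have n0: "n \<noteq> 0" using key[OF p1] unfolding n_def by simp
  have "h1 mod n = h2 mod n" "k1 mod n = k2 mod n" using fe unfolding f_def n_def[symmetric] n2 by auto
  hence dh: "n dvd h1 - h2" and dk: "n dvd k1 - k2" by (simp_all add: mod_eq_dvd_iff)
  have n1e: "h1^2 - int D * k1^2 = n" and n2e: "h2^2 - int D * k2^2 = n"
    using n2 unfolding n_def N_def by simp_all
  have "h1*h2 - int D*k1*k2 = h2*(h1-h2) - int D*k2*(k1-k2) + (h2^2 - int D*k2^2)"
    by (simp add: algebra_simps power2_eq_square)
  moreover have "n dvd h2*(h1-h2) - int D*k2*(k1-k2) + (h2^2 - int D*k2^2)"
    unfolding n2e by (intro dvd_add dvd_diff dvd_mult dh dk dvd_refl)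
  ultimately have "n dvd h1*h2 - int D*k1*k2" by simp
  then obtain X where X: "h1*h2 - int D*k1*k2 = n * X" by (elim dvdE)
  have "h2*k1 - h1*k2 = h2*(k1-k2) - k2*(h1-h2)" by (simp add: algebra_simps)
  moreover have "n dvd h2*(k1-k2) - k2*(h1-h2)" by (intro dvd_diff dvd_mult dh dk)
  ultimately have "n dvd h2*k1 - h1*k2" by simp
  then obtain Y where Y: "h2*k1 - h1*k2 = n * Y" by (elim dvdE)
  have "(n*X)^2 - int D*(n*Y)^2 = (h1*h2 - int D*k1*k2)^2 - int D*(h2*k1 - h1*k2)^2"
    by (simp add: X Y)
  also have "\<dots> = (h1^2 - int D * k1^2) * (h2^2 - int D * k2^2)" by (simp add: power2_eq_square algebra_simps)
  also have "\<dots> = n * n" using n1e n2e by simp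
  finally have "n * n * (X^2 - int D * Y^2) = n * n * 1" by (simp add: algebra_simps power2_eq_square)
  hence XY: "X^2 - int D * Y^2 = 1" using n0 by simp
  define z1 where "z1 = real_of_int h1 + real_of_int k1 * r"
  define z2 where "z2 = real_of_int h2 + real_of_int k2 * r"
  define w where "w = real_of_int X + real_of_int Y * r"
  have z1p: "z1 > 0" using key[OF p1] unfolding z1_def by simp
  have z2p: "z2 > 0" using key[OF p2] unfolding z2_def by simp
  have "real_of_int n * w = (real_of_int h1 + real_of_int k1 * r) * (real_of_int h2 - real_of_int k2 * r)"
  proof -
    have "real_of_int n * w = real_of_int (n*X) + real_of_int (n*Y) * r" unfolding w_def by (simp add: algebra_simps)
    also have "\<dots> = real_of_int (h1*h2 - int D*k1*k2) + real_of_int (h2*k1 - h1*k2) * r" by (simp only: X Y)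
    also have "\<dots> = (real_of_int h1 + real_of_int k1 * r) * (real_of_int h2 - real_of_int k2 * r)"
      using rr by (simp add: algebra_simps)
    finally show ?thesis .
  qed
  moreover have "(real_of_int h2 - real_of_int k2 * r) * z2 = real_of_int n"
  proof -
    have "real_of_int n = real_of_int (h2^2 - int D * k2^2)" using n2e by simp
    also have "\<dots> = (real_of_int h2)^2 - (r*r) * (real_of_int k2)^2" using rr by simp
    finally show ?thesis unfolding z2_def by (simp add: algebra_simps power2_eq_square)
  qed
  ultimately have "real_of_int n * (w * z2) = real_of_int n * z1"
    unfolding z1_def by (metis mult.assoc mult.commute)
  hence wz: "w * z2 = z1" using n0 by simp
  have "z1 \<noteq> z2"
  proof
    assume "z1 = z2"
    hence "h1 = h2 \<and> k1 = k2" using eq_coeffs[OF ns] unfolding z1_def z2_def r_def by blast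
    thus False using ne by simp
  qed
  hence w1: "w \<noteq> 1" using wz by auto
  have "w = z1 / z2" using wz z2p by (simp add: field_simps)
  hence w0: "w > 0" using z1p z2p by simp
  show ?thesis
  proof (cases "w > 1")
    case True thus ?thesis using XY unfolding w_def r_def by blast
  next
    case False hence wl: "w < 1" using w1 by simp
    have "w * (real_of_int X - real_of_int Y * r) = real_of_int (X^2 - int D * Y^2)"
      unfolding w_def using rr by (simp add: algebra_simps power2_eq_square)
    hence "w * (real_of_int X - real_of_int Y * r) = 1" using XY by simp
    hence "real_of_int X - real_of_int Y * r = 1 / w" using w0 by (simp add: field_simps)
    hence "real_of_int X - real_of_int Y * r > 1" using wl w0 by simp
    hence "real_of_int X + real_of_int (-Y) * sqrt (real D) > 1" unfolding r_def by simp
    moreover have "X^2 - int D * (-Y)^2 = 1" using XY by simp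
    ultimately show ?thesis by blast
  qed
qed



lemma norm_one_iff:
  "z \<in> norm_one (int D) \<longleftrightarrow> (\<exists>x y. x^2 - int D * y^2 = 1 \<and> z = real_of_int x + real_of_int y * sqrt (real D))"
  unfolding norm_one_def by auto

lemma n1_mult:
  assumes "z \<in> norm_one (int D)" "w \<in> norm_one (int D)"
  shows "z * w \<in> norm_one (int D)"
proof -
  define r where "r = sqrt (real D)"
  have rr: "r * r = real D" unfolding r_def by simp
  obtain x y where xy: "x^2 - int D * y^2 = 1" "z = real_of_int x + real_of_int y * r"
    using assms(1) unfolding norm_one_iff r_def by blast
  obtain x' y' where xy': "x'^2 - int D * y'^2 = 1" "w = real_of_int x' + real_of_int y' * r"
    using assms(2) unfolding norm_one_iff r_def by blast
  have "(x*x' + int D*y*y')^2 - int D * (x*y' + x'*y)^2 = (x^2 - int D * y^2) * (x'^2 - int D * y'^2)"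
    by (simp add: power2_eq_square algebra_simps)
  hence n: "(x*x' + int D*y*y')^2 - int D * (x*y' + x'*y)^2 = 1" using xy xy' by simp
  have "z * w = real_of_int x * real_of_int x' + (r*r) * real_of_int y * real_of_int y' + real_of_int (x*y' + x'*y) * r"
    unfolding xy xy' by (simp add: algebra_simps)
  also have "\<dots> = real_of_int (x*x' + int D*y*y') + real_of_int (x*y' + x'*y) * r"
    using rr by simp
  finally show ?thesis using n unfolding norm_one_iff r_def by blast
qed

lemma n1_inv:
  assumes "z \<in> norm_one (int D)"
  shows "inverse z \<in> norm_one (int D)"
proof -
  define r where "r = sqrt (real D)"
  have rr: "r * r = real D" unfolding r_def by simp
  obtain x y where xy: "x^2 - int D * y^2 = 1" "z = real_of_int x + real_of_int y * r"
    using assms(1) unfolding norm_one_iff r_def by blast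
  have "z * (real_of_int x - real_of_int y * r) = (real_of_int x)^2 - (r*r) * (real_of_int y)^2"
    unfolding xy by (simp add: algebra_simps power2_eq_square)
  also have "\<dots> = real_of_int (x^2 - int D * y^2)" using rr by simp
  finally have "z * (real_of_int x - real_of_int y * r) = 1" using xy by simp
  hence "inverse z = real_of_int x - real_of_int y * r" by (rule inverse_unique)
  hence "inverse z = real_of_int x + real_of_int (-y) * r" by simp
  moreover have "x^2 - int D * (-y)^2 = 1" using xy by simp
  ultimately show ?thesis unfolding norm_one_iff r_def by blast
qed

lemma n1_one: "1 \<in> norm_one (int D)"
  unfolding norm_one_iff by (rule exI[of _ 1], rule exI[of _ 0]) simp

lemma n1_neg: assumes "z \<in> norm_one (int D)" shows "- z \<in> norm_one (int D)"
proof -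
  obtain x y where xy: "x^2 - int D * y^2 = 1" "z = real_of_int x + real_of_int y * sqrt (real D)"
    using assms(1) unfolding norm_one_iff by blast
  hence "-z = real_of_int (-x) + real_of_int (-y) * sqrt (real D)" "(-x)^2 - int D * (-y)^2 = 1" by simp_all
  thus ?thesis unfolding norm_one_iff by blast
qed

lemma n1_pow: assumes "z \<in> norm_one (int D)" shows "z ^ n \<in> norm_one (int D)"
  by (induction n) (simp_all add: n1_one n1_mult assms)

lemma n1_powi: assumes "z \<in> norm_one (int D)" shows "z powi k \<in> norm_one (int D)"
  unfolding power_int_def using n1_pow[OF assms] n1_pow[OF n1_inv[OF assms]] by simp

lemma fund_unit_gt1:
  fixes D :: nat assumes ns: "\<not>(\<exists>s. D = s^2)"
  shows "fund_unit (int D) > 1"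
proof -
  define r where "r = sqrt (real D)"
  have D2: "D \<ge> 2" using ns_ge2[OF ns] .
  have r1: "r \<ge> 1" unfolding r_def using D2 by simp
  define N where "N = norm_one (int D)"
  obtain x y where xy: "x^2 - int D * y^2 = 1" "real_of_int x + real_of_int y * sqrt (real D) > 1"
    using pell_exists[OF ns] by blast
  have xy0: "x > 0 \<and> y > 0" using pos_parts[OF _ xy] D2 by simp
  define P where "P = (\<lambda>y::nat. y > 0 \<and> (\<exists>x::int. x > 0 \<and> x^2 - int D * (int y)^2 = 1))"
  have "P (nat y)" unfolding P_def using xy xy0 by auto
  define y0 where "y0 = (LEAST y. P y)"
  have P0: "P y0" unfolding y0_def by (rule LeastI) fact
  have ymin: "y0 \<le> y'" if "P y'" for y' unfolding y0_def using that by (rule Least_le)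
  obtain x0 where x0: "x0 > 0" "x0^2 - int D * (int y0)^2 = 1" "y0 > 0" using P0 unfolding P_def by blast
  define e where "e = real_of_int x0 + real y0 * r"
  have eN: "e \<in> N" unfolding N_def norm_one_iff e_def r_def using x0
    by (intro exI[of _ x0] exI[of _ "int y0"]) simp
  have "real_of_int x0 \<ge> 1" "real y0 \<ge> 1" using x0 by simp_all
  hence "real y0 * r \<ge> 1" using mult_mono[of 1 "real y0" 1 r] r1 by simp
  hence e1: "e > 1" unfolding e_def using \<open>real_of_int x0 \<ge> 1\<close> by linarith
  have key: "e \<le> w" if wN0: "w \<in> N" and wg1: "w > 1" for w
  proof -
    obtain xw yw where w: "xw^2 - int D * yw^2 = 1" "w = real_of_int xw + real_of_int yw * r"
      using wN0 unfolding N_def norm_one_iff r_def by blast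
    have pw: "xw > 0 \<and> yw > 0" using pos_parts[of D xw yw] w wg1 D2 unfolding r_def by simp
    have "P (nat yw)" unfolding P_def using pw w by auto
    hence "y0 \<le> nat yw" by (rule ymin)
    hence yy: "int y0 \<le> yw" using pw by (simp add: le_nat_iff)
    hence "int D * (int y0)^2 \<le> int D * yw^2" using x0(3) by (intro mult_left_mono power_mono) auto
    hence "x0^2 \<le> xw^2" using w(1) x0(2) by linarith
    moreover have "0 \<le> xw" using pw by simp
    ultimately have "x0 \<le> xw" by (rule power2_le_imp_le)
    moreover have "real y0 * r \<le> real_of_int yw * r" using yy r1 by (intro mult_right_mono) auto
    ultimately show ?thesis unfolding e_def w(2) by simp
  qed
  have lne: "ln e > 0" using e1 by simp
  have posgen: "\<exists>k. z = e powi k" if zN: "z \<in> N" and zp: "z > 0" for z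
  proof -
    define k where "k = \<lfloor>ln z / ln e\<rfloor>"
    have "real_of_int k \<le> ln z / ln e" "ln z / ln e < real_of_int k + 1" unfolding k_def by linarith+
    hence k1: "real_of_int k * ln e \<le> ln z" "ln z < real_of_int k * ln e + ln e"
      using lne by (simp_all add: field_simps)
    have ek: "e powi k = exp (real_of_int k * ln e)"
      using exp_power_int[of "ln e" k] e1 by simp
    have "exp (real_of_int k * ln e) \<le> exp (ln z)" using k1(1) by simp
    hence ez: "e powi k \<le> z" unfolding ek using zp by simp
    have "exp (ln z) < exp (real_of_int k * ln e + ln e)" using k1(2) by simp
    also have "exp (real_of_int k * ln e + ln e) = e powi k * e" unfolding ek exp_add using e1 by simp
    finally have ze: "z < e powi k * e" using zp by simp
    have pk: "e powi k > 0" using e1 by simp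
    define w where "w = z * e powi (-k)"
    have wN: "w \<in> N" unfolding w_def N_def using zN eN n1_mult n1_powi unfolding N_def by blast
    have wz: "w = z / e powi k" unfolding w_def by (simp add: power_int_minus divide_inverse)
    have w1: "w \<ge> 1" unfolding wz using pk ez by (simp add: pos_le_divide_eq)
    have w2: "w < e" unfolding wz using pk ze by (simp add: pos_divide_less_eq mult.commute)
    have "\<not> w > 1" using key[OF wN] w2 by linarith
    hence "w = 1" using w1 by simp
    hence "z = e powi k" using wz pk by simp
    thus ?thesis by blast
  qed
  have gen: "\<exists>k::int. z = e powi k \<or> z = - (e powi k)" if zN: "z \<in> N" for z
  proof -
    obtain xz yz where z: "xz^2 - int D * yz^2 = 1" "z = real_of_int xz + real_of_int yz * sqrt (real D)"
      using zN unfolding N_def norm_one_iff by blast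
    have "z \<noteq> 0"
    proof
      assume "z = 0"
      hence "xz = 0 \<and> yz = 0" using irr0[OF ns] z(2) by simp
      thus False using z(1) by simp
    qed
    show ?thesis
    proof (cases "z > 0")
      case True thus ?thesis using posgen zN by blast
    next
      case False hence "-z > 0" using \<open>z\<noteq>0\<close> by simp
      moreover have "-z \<in> N" using zN n1_neg unfolding N_def by blast
      ultimately obtain k where "-z = e powi k" using posgen by blast
      hence "z = - (e powi k)" by simp
      thus ?thesis by blast
    qed
  qed
  have "fund_unit (int D) = e"
    unfolding fund_unit_def
  proof (rule the_equality)
    show "e > 1 \<and> e \<in> norm_one (int D) \<and> (\<forall>z\<in>norm_one (int D). \<exists>k::int. z = e powi k \<or> z = - (e powi k))"
      using e1 eN gen unfolding N_def by blast
  next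
    fix e' assume h: "e' > 1 \<and> e' \<in> norm_one (int D) \<and> (\<forall>z\<in>norm_one (int D). \<exists>k::int. z = e' powi k \<or> z = - (e' powi k))"
    have "e \<le> e'" using key h unfolding N_def by blast
    obtain j where j: "e = e' powi j \<or> e = - (e' powi j)" using h eN unfolding N_def by blast
    have pj: "e' powi j > 0" using h by simp
    hence ej: "e = e' powi j" using j e1 by auto
    show "e' = e"
    proof (cases "j \<ge> 1")
      case True
      have "e' powi j = e' ^ nat j" using True by (simp add: power_int_def)
      also have "\<dots> \<ge> e' ^ 1" using True h by (intro power_increasing) auto
      finally show ?thesis using ej \<open>e \<le> e'\<close> by simp
    next
      case False
      hence "e' powi j = inverse (e' ^ nat (-j))" by (simp add: power_int_def power_inverse)
      moreover have "e' ^ nat (-j) \<ge> 1" using h by simp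
      ultimately have "e' powi j \<le> 1" by (simp add: inverse_le_1_iff)
      thus ?thesis using ej e1 by simp
    qed
  qed
  thus ?thesis using e1 by simp
qed



lemma num_divisors_pos: "n > 0 \<Longrightarrow> num_divisors n \<ge> 1"
proof -
  assume n: "n > 0"
  have "{d. d dvd n} \<subseteq> {..n}" using n by (auto dest: dvd_imp_le)
  hence "finite {d. d dvd n}" by (rule finite_subset) simp
  moreover have "1 \<in> {d. d dvd n}" by simp
  ultimately have "card {d. d dvd n} > 0" by (auto simp: card_gt_0_iff)
  thus ?thesis unfolding num_divisors_def by simp
qed

lemma ns_AB:
  fixes a b A' B' a' b' :: nat
  assumes "0 < a" "0 < b" and "coprime a b"
    and "\<not> ((\<exists>x. a = x^2) \<and> (\<exists>y. b = y^2))"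
    and "a = A' * a'^2" and "b = B' * b'^2"
  shows "\<not> (\<exists>s. A' * B' = s^2)"
proof
  assume "\<exists>s. A' * B' = s^2"
  then obtain s where s: "A' * B' = s^2" by blast
  have "a * b = (s * a' * b')^2" using assms(5,6) s by (simp add: power_mult_distrib algebra_simps)
  hence "is_nth_power 2 (a * b)" by (metis is_nth_power_nth_power)
  hence "is_nth_power 2 a \<and> is_nth_power 2 b" using is_nth_power_mult_coprime_nat_iff[OF assms(3)] by blast
  thus False using assms(4) by (auto elim!: is_nth_powerE)
qed

theorem mainTheorem9:
  fixes a b A' B' a' b' :: nat and \<Xi> :: real
  assumes "0 < a" and "a < b" and "coprime a b"
    and "\<not> ((\<exists>x. a = x^2) \<and> (\<exists>y. b = y^2))"
    and "a = A' * a'^2" and "squarefree A'"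
    and "b = B' * b'^2" and "squarefree B'"
    and "\<Xi> > 0"
    and "\<forall>(u::int) (v::nat). v \<ge> 1 \<longrightarrow>
           \<bar>real_of_int u / real v - sqrt (real b / real a)\<bar> \<ge> \<Xi> / (real v)^2"
  shows "\<forall>\<epsilon>::real. \<epsilon> > \<Xi> \<longrightarrow> (\<exists>B0::real. \<forall>B\<ge>B0.
           delta (sqrt (real b / real a)) B (1/2) (chi \<epsilon>)
           \<le> 6 * (\<Sum>m\<in>{m::int. m \<noteq> 0 \<and> real_of_int \<bar>m\<bar> \<le> 2 * \<epsilon> * sqrt (real (a * b)) + 1}.
                  real (num_divisors (A' * nat \<bar>m\<bar>)) *
                  real_of_int (\<lfloor>(ln \<epsilon> - ln \<Xi>) / (2 * ln (fund_unit (int (A' * B'))))\<rfloor> + 1)))"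
proof (intro allI impI)
  fix \<epsilon> :: real assume eps: "\<epsilon> > \<Xi>"
  have ep: "\<epsilon> > 0" using eps assms(9) by linarith
  define \<theta> where "\<theta> = sqrt (real b / real a)"
  define s where "s = sqrt (real (a * b))"
  have a0: "real a > 0" "real a \<ge> 1" using assms(1) by simp_all
  have b0: "real b > 0" using assms(1,2) by simp
  have th0: "\<theta> > 0" unfolding \<theta>_def using a0 b0 by simp
  have thth: "\<theta> * \<theta> = real b / real a" unfolding \<theta>_def using a0 b0 by simp
  have ath: "real a * \<theta> * \<theta> = real b" using thth a0 by (simp add: field_simps)
  have as: "real a * \<theta> = s"
  proof -
    have "(real a * \<theta>)^2 = real (a * b)" using ath by (simp add: power2_eq_square algebra_simps)
    hence "sqrt ((real a * \<theta>)^2) = s" unfolding s_def by simp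
    thus ?thesis using a0 th0 by simp
  qed
  have s0: "s > 0" unfolding as[symmetric] using a0 th0 by simp
  define F where "F = fund_unit (int (A' * B'))"
  define K where "K = \<lfloor>(ln \<epsilon> - ln \<Xi>) / (2 * ln F)\<rfloor>"
  have F1: "F > 1" unfolding F_def
    using fund_unit_gt1[OF ns_AB[OF assms(1) _ assms(3,4,5,7)]] assms(1,2) by simp
  have "ln \<epsilon> - ln \<Xi> > 0" using eps assms(9) by simp
  moreover have "2 * ln F > 0" using F1 by simp
  ultimately have K0: "K \<ge> 0" unfolding K_def by simp
  have A'0: "A' > 0" using assms(1,5) by (cases "A' = 0") simp_all
  define Ms where "Ms = {m::int. m \<noteq> 0 \<and> real_of_int \<bar>m\<bar> \<le> 2 * \<epsilon> * s + 1}"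
  define L where "L = \<lfloor>2 * \<epsilon> * s + 1\<rfloor>"
  have L1: "L \<ge> 1" unfolding L_def using ep s0 by simp
  have L2: "real_of_int L > 2 * \<epsilon> * s" unfolding L_def by linarith
  define f where "f = (\<lambda>m::int. real (num_divisors (A' * nat \<bar>m\<bar>)) * real_of_int (K + 1))"
  have f1: "f m \<ge> 1" if "m \<noteq> 0" for m
  proof -
    have "A' * nat \<bar>m\<bar> > 0" using A'0 that by simp
    hence "real (num_divisors (A' * nat \<bar>m\<bar>)) \<ge> 1" using num_divisors_pos by simp
    moreover have "real_of_int (K + 1) \<ge> 1" using K0 by simp
    ultimately show ?thesis unfolding f_def using mult_mono[of 1 _ 1] by fastforce
  qed
  have finMs: "finite Ms"
  proof (rule finite_subset)
    show "Ms \<subseteq> {-L..L}"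
    proof
      fix m assume "m \<in> Ms"
      hence "real_of_int \<bar>m\<bar> \<le> 2 * \<epsilon> * s + 1" unfolding Ms_def by simp
      hence "\<bar>m\<bar> \<le> L" unfolding L_def by (simp only: le_floor_iff)
      thus "m \<in> {-L..L}" by (simp add: abs_le_iff)
    qed
  qed simp
  have subM: "{1..L} \<subseteq> Ms"
  proof
    fix m assume m: "m \<in> {1..L}"
    hence "m \<le> L" "m \<ge> 1" by auto
    hence "real_of_int m \<le> 2 * \<epsilon> * s + 1" unfolding L_def by (simp only: le_floor_iff)
    thus "m \<in> Ms" unfolding Ms_def using \<open>m \<ge> 1\<close> by simp
  qed
  have "(\<Sum>m\<in>{1..L}. (1::real)) \<le> (\<Sum>m\<in>{1..L}. f m)" by (intro sum_mono f1) auto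
  also have "\<dots> \<le> (\<Sum>m\<in>Ms. f m)"
  proof (rule sum_mono2[OF finMs subM])
    fix m assume "m \<in> Ms - {1..L}"
    hence "m \<noteq> 0" unfolding Ms_def by simp
    thus "0 \<le> f m" using f1[of m] by simp
  qed
  finally have RHS: "real_of_int L \<le> (\<Sum>m\<in>Ms. f m)" using L1 by simp
  define B0 where "B0 = 1 + 2*\<epsilon> + 4*\<epsilon>*real a"
  show "\<exists>B0::real. \<forall>B\<ge>B0. delta (sqrt (real b / real a)) B (1/2) (chi \<epsilon>)
           \<le> 6 * (\<Sum>m\<in>{m::int. m \<noteq> 0 \<and> real_of_int \<bar>m\<bar> \<le> 2 * \<epsilon> * sqrt (real (a * b)) + 1}.
                  real (num_divisors (A' * nat \<bar>m\<bar>)) *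
                  real_of_int (\<lfloor>(ln \<epsilon> - ln \<Xi>) / (2 * ln (fund_unit (int (A' * B'))))\<rfloor> + 1))"
  proof (intro exI[of _ B0] allI impI)
    fix B assume BB: "B \<ge> B0"
    have "0 \<le> 4 * \<epsilon> * real a" using ep a0 by simp
    hence B0': "B > 0" "B > 2 * \<epsilon>" "B \<ge> 4 * \<epsilon> * real a" using BB ep unfolding B0_def by linarith+
    define t where "t = \<epsilon> / B"
    have t0: "t > 0" unfolding t_def using ep B0' by simp
    have t1: "t < 1/2" unfolding t_def using B0' ep by (simp add: field_simps)
    have t2: "4 * real a * t \<le> 1" unfolding t_def using B0' ep by (simp add: field_simps)
    define S where "S = {(u::int, v::int). v \<ge> 1 \<and> coprime u v \<and> real_of_int (max \<bar>u\<bar> \<bar>v\<bar>) \<le> B}"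
    define T where "T = {p \<in> S. \<bar>B^2 * (real_of_int (fst p) / real_of_int (snd p) - \<theta>)\<bar> \<le> \<epsilon>}"
    define n where "n = \<lceil>B\<rceil>"
    have finS: "finite S"
    proof (rule finite_subset)
      show "S \<subseteq> {-n..n} \<times> {-n..n}"
      proof
        fix p assume "p \<in> S"
        then obtain u v where p: "p = (u,v)" and m: "real_of_int (max \<bar>u\<bar> \<bar>v\<bar>) \<le> B" unfolding S_def by auto
        have "real_of_int \<bar>u\<bar> \<le> real_of_int (max \<bar>u\<bar> \<bar>v\<bar>)" "real_of_int \<bar>v\<bar> \<le> real_of_int (max \<bar>u\<bar> \<bar>v\<bar>)"
          by (simp_all only: of_int_le_iff)
        hence "real_of_int \<bar>u\<bar> \<le> real_of_int n" "real_of_int \<bar>v\<bar> \<le> real_of_int n"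
          using m le_of_int_ceiling[of B] unfolding n_def by linarith+
        hence "\<bar>u\<bar> \<le> n" "\<bar>v\<bar> \<le> n" by (simp_all only: of_int_le_iff)
        thus "p \<in> {-n..n} \<times> {-n..n}" unfolding p by (simp add: abs_le_iff)
      qed
    qed simp
    have LHS: "delta \<theta> B (1/2) (chi \<epsilon>) = real (card T)"
    proof -
      have "delta \<theta> B (1/2) (chi \<epsilon>) = (\<Sum>p\<in>S. if p \<in> T then 1 else 0)"
        unfolding delta_def S_def[symmetric] chi_def T_def using B0'(1)
        by (intro sum.cong) auto
      also have "\<dots> = (\<Sum>p\<in>S \<inter> T. 1)" by (rule sum.inter_restrict[OF finS, symmetric])
      also have "S \<inter> T = T" unfolding T_def by auto
      finally show ?thesis by simp
    qed
    have Tp: "1 \<le> v \<and> real_of_int v \<le> B \<and> \<bar>real_of_int u - \<theta> * real_of_int v\<bar> \<le> t" if "(u,v) \<in> T" for u v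
    proof -
      have v1: "v \<ge> 1" and vB: "real_of_int v \<le> B" and ap: "\<bar>B^2 * (real_of_int u / real_of_int v - \<theta>)\<bar> \<le> \<epsilon>"
        using that unfolding T_def S_def by auto
      have vp: "real_of_int v > 0" using v1 by simp
      have "\<bar>real_of_int u / real_of_int v - \<theta>\<bar> \<le> \<epsilon> / B^2"
      proof -
        have "B^2 * \<bar>real_of_int u / real_of_int v - \<theta>\<bar> \<le> \<epsilon>" using ap by (simp add: abs_mult)
        moreover have "B^2 > 0" using B0'(1) by simp
        ultimately show ?thesis by (simp add: pos_le_divide_eq mult.commute)
      qed
      moreover have "real_of_int u - \<theta> * real_of_int v = real_of_int v * (real_of_int u / real_of_int v - \<theta>)"
        using vp by (simp add: field_simps)
      ultimately have "\<bar>real_of_int u - \<theta> * real_of_int v\<bar> \<le> real_of_int v * (\<epsilon> / B^2)"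
      proof -
        assume xx: "\<bar>real_of_int u / real_of_int v - \<theta>\<bar> \<le> \<epsilon> / B^2"
          and eqv: "real_of_int u - \<theta> * real_of_int v = real_of_int v * (real_of_int u / real_of_int v - \<theta>)"
        have "\<bar>real_of_int u - \<theta> * real_of_int v\<bar> = real_of_int v * \<bar>real_of_int u / real_of_int v - \<theta>\<bar>"
          unfolding eqv abs_mult using vp by simp
        also have "\<dots> \<le> real_of_int v * (\<epsilon> / B^2)" using xx vp by (intro mult_left_mono) auto
        finally show ?thesis .
      qed
      also have "\<dots> \<le> B * (\<epsilon> / B^2)" using vB ep by (intro mult_right_mono) auto
      also have "\<dots> = t" unfolding t_def using B0'(1) by (simp add: power2_eq_square)
      finally show ?thesis using v1 vB by simp
    qed
    define g where "g = 1 / (8 * s * t)"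
    have g0: "g > 0" unfolding g_def using s0 t0 by simp
    have spacing: "\<bar>real_of_int v1 - real_of_int v2\<bar> \<ge> g"
      if p1: "(u1,v1) \<in> T" and p2: "(u2,v2) \<in> T" and ne: "(u1,v1) \<noteq> (u2,v2)" for u1 v1 u2 v2
    proof -
      note h1 = Tp[OF p1] and h2 = Tp[OF p2]
      define du where "du = u1 - u2"
      define dv where "dv = v1 - v2"
      have dd: "\<bar>real_of_int du - \<theta> * real_of_int dv\<bar> \<le> 2 * t"
        using h1 h2 unfolding du_def dv_def by (simp add: algebra_simps) linarith
      have dv0: "dv \<noteq> 0"
      proof
        assume "dv = 0"
        hence "\<bar>real_of_int du\<bar> < 1" using dd t1 by simp
        hence "du = 0" by linarith
        thus False using \<open>dv = 0\<close> ne unfolding du_def dv_def by simp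
      qed
      have mnz: "int a * du^2 - int b * dv^2 \<noteq> 0"
      proof
        assume z: "int a * du^2 - int b * dv^2 = 0"
        hence "real_of_int (int a * du^2) = real_of_int (int b * dv^2)" by simp
        hence "real a * (real_of_int du)^2 = real b * (real_of_int dv)^2" by simp
        hence q2: "(real_of_int \<bar>du\<bar> / real_of_int \<bar>dv\<bar>)^2 = real b / real a"
          using a0 dv0 by (simp add: field_simps power_divide)
        have "real_of_int \<bar>du\<bar> / real_of_int \<bar>dv\<bar> \<ge> 0" by simp
        hence qq: "sqrt (real b / real a) = real_of_int \<bar>du\<bar> / real_of_int \<bar>dv\<bar>"
          using q2 by (intro real_sqrt_unique) auto
        have nv: "nat \<bar>dv\<bar> \<ge> 1" using dv0 by simp
        have rv: "real (nat \<bar>dv\<bar>) = real_of_int \<bar>dv\<bar>" by simp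
        have "\<bar>real_of_int \<bar>du\<bar> / real (nat \<bar>dv\<bar>) - sqrt (real b / real a)\<bar> \<ge> \<Xi> / (real (nat \<bar>dv\<bar>))^2"
          using assms(10) nv by blast
        hence "0 \<ge> \<Xi> / (real (nat \<bar>dv\<bar>))^2" unfolding qq rv by simp
        moreover have "\<Xi> / (real (nat \<bar>dv\<bar>))^2 > 0" using assms(9) dv0 by simp
        ultimately show False by simp
      qed
      have "\<bar>int a * du^2 - int b * dv^2\<bar> \<ge> 1" using mnz by linarith
      hence "real_of_int \<bar>int a * du^2 - int b * dv^2\<bar> \<ge> real_of_int 1" by (simp only: of_int_le_iff)
      hence m1: "\<bar>real_of_int (int a * du^2 - int b * dv^2)\<bar> \<ge> 1" by simp
      have "real_of_int (int a * du^2 - int b * dv^2)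
          = real a * (real_of_int du - \<theta> * real_of_int dv) * (real_of_int du + \<theta> * real_of_int dv)"
        using ath[symmetric] by (simp add: algebra_simps power2_eq_square)
      hence "1 \<le> real a * \<bar>real_of_int du - \<theta> * real_of_int dv\<bar> * \<bar>real_of_int du + \<theta> * real_of_int dv\<bar>"
        using m1 a0 by (simp add: abs_mult)
      also have "\<dots> \<le> real a * (2 * t) * (2 * t + 2 * \<theta> * \<bar>real_of_int dv\<bar>)"
      proof (intro mult_mono mult_left_mono dd)
        show "\<bar>real_of_int du + \<theta> * real_of_int dv\<bar> \<le> 2 * t + 2 * \<theta> * \<bar>real_of_int dv\<bar>"
        proof -
          have tri: "\<bar>real_of_int du + \<theta> * real_of_int dv\<bar> \<le> \<bar>real_of_int du - \<theta> * real_of_int dv\<bar> + \<bar>2 * (\<theta> * real_of_int dv)\<bar>"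
            using abs_triangle_ineq[of "real_of_int du - \<theta> * real_of_int dv" "2 * (\<theta> * real_of_int dv)"] by (simp add: algebra_simps)
          have "\<bar>2 * (\<theta> * real_of_int dv)\<bar> = 2 * \<theta> * \<bar>real_of_int dv\<bar>" using th0 by (simp add: abs_mult)
          thus ?thesis using tri dd by linarith
        qed
      qed (use a0 t0 th0 in auto)
      also have "\<dots> = 4 * real a * t * t + 4 * s * t * \<bar>real_of_int dv\<bar>"
        using as[symmetric] by (simp add: algebra_simps)
      finally have ineq: "1 \<le> 4 * real a * t * t + 4 * s * t * \<bar>real_of_int dv\<bar>" .
      have "4 * real a * t * t \<le> 1 * t" using t2 t0 by (intro mult_right_mono) auto
      hence "1/2 \<le> 4 * s * t * \<bar>real_of_int dv\<bar>" using ineq t1 by linarith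
      hence "1 / (8 * s * t) \<le> \<bar>real_of_int dv\<bar>" using s0 t0 by (simp add: field_simps)
      thus ?thesis unfolding g_def dv_def by simp
    qed
    define \<phi> where "\<phi> = (\<lambda>p::int\<times>int. \<lfloor>real_of_int (snd p) / g\<rfloor>)"
    have inj: "inj_on \<phi> T"
    proof (rule inj_onI)
      fix p q assume p: "p \<in> T" and q: "q \<in> T" and e: "\<phi> p = \<phi> q"
      obtain u1 v1 where pp: "p = (u1,v1)" by (cases p)
      obtain u2 v2 where qq: "q = (u2,v2)" by (cases q)
      have "\<bar>real_of_int v1 / g - real_of_int v2 / g\<bar> < 1" using e unfolding \<phi>_def pp qq by simp linarith
      hence "\<bar>real_of_int v1 - real_of_int v2\<bar> < g" using g0 by (simp add: field_simps abs_divide[symmetric] diff_divide_distrib[symmetric])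
      thus "p = q" using spacing[of u1 v1 u2 v2] p q unfolding pp qq by force
    qed
    define R where "R = \<lfloor>8 * \<epsilon> * s\<rfloor>"
    have img: "\<phi> ` T \<subseteq> {0..R}"
    proof
      fix z assume "z \<in> \<phi> ` T"
      then obtain u v where uv: "(u,v) \<in> T" and z: "z = \<lfloor>real_of_int v / g\<rfloor>" unfolding \<phi>_def by auto
      have "1 \<le> v" "real_of_int v \<le> B" using Tp[OF uv] by auto
      hence "real_of_int v / g \<ge> 0" "real_of_int v / g \<le> B / g" using g0 by (simp_all add: divide_right_mono)
      moreover have "B / g = 8 * \<epsilon> * s" unfolding g_def t_def using B0'(1) by (simp add: field_simps)
      ultimately show "z \<in> {0..R}" unfolding z R_def by (auto intro: floor_mono)
    qed
    have "card T \<le> card {0..R}" using card_inj_on_le[OF inj img] by simp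
    hence c1: "real (card T) \<le> real (nat (R + 1))" by simp
    have "R \<ge> 0" unfolding R_def using ep s0 by simp
    hence "real (nat (R + 1)) = real_of_int R + 1" by simp
    hence "real (card T) \<le> real_of_int R + 1" using c1 by simp
    also have "\<dots> \<le> 8 * \<epsilon> * s + 1" unfolding R_def by linarith
    also have "\<dots> \<le> 6 * real_of_int L" using L1 L2 by linarith
    also have "\<dots> \<le> 6 * (\<Sum>m\<in>Ms. f m)" using RHS by simp
    finally have fin: "delta \<theta> B (1/2) (chi \<epsilon>) \<le> 6 * (\<Sum>m\<in>Ms. f m)" unfolding LHS .
    show "delta (sqrt (real b / real a)) B (1/2) (chi \<epsilon>)
           \<le> 6 * (\<Sum>m\<in>{m::int. m \<noteq> 0 \<and> real_of_int \<bar>m\<bar> \<le> 2 * \<epsilon> * sqrt (real (a * b)) + 1}.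
                  real (num_divisors (A' * nat \<bar>m\<bar>)) *
                  real_of_int (\<lfloor>(ln \<epsilon> - ln \<Xi>) / (2 * ln (fund_unit (int (A' * B'))))\<rfloor> + 1))"
      using fin unfolding \<theta>_def Ms_def f_def K_def F_def s_def .
  qed
qed


end
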